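(* $P_n$ has exactly one matching ordering for $n=1$, exactly three matching orderings for $n=3$ and $n=4$, and exactly two matching orderings for every other $n\ge 2$.
   Context: A tournament is a finite, non-null, loopless directed graph in which for any two distinct vertices $u,v$ there is exactly one edge with both ends in $\{u,v\}$; write $u\to v$ for the edge from $u$ to $v$. Given an ordering $v_1,\dots,v_n$ of the vertices, a backedge is an edge $v_j\to v_i$ with $j>i$; the ordering is a matching ordering if every vertex is the head or tail of at most one backedge. $P_n$ is the tournament on $v_1,\dots,v_n$ with $v_i\to v_j$ if $j-i\ge2$ and $v_{i+1}\to v_i$ for $1\le i\le n-1$. *)

theory Defs
  imports Main
begin

definition is_tournament :: "'a set \<Rightarrow> ('a \<Rightarrow> 'a \<Rightarrow> bool) \<Rightarrow> bool" where
  "is_tournament V T \<longleftrightarrow> finite V \<and> V \<noteq> {} \<and>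
     (\<forall>u v. T u v \<longrightarrow> u \<in> V \<and> v \<in> V) \<and> (\<forall>v. \<not> T v v) \<and>
     (\<forall>u\<in>V. \<forall>v\<in>V. u \<noteq> v \<longrightarrow> (T u v \<longleftrightarrow> \<not> T v u))"

definition is_ordering :: "'a set \<Rightarrow> 'a list \<Rightarrow> bool" where
  "is_ordering V xs \<longleftrightarrow> distinct xs \<and> set xs = V"

definition backedges :: "('a \<Rightarrow> 'a \<Rightarrow> bool) \<Rightarrow> 'a list \<Rightarrow> ('a \<times> 'a) set" where
  "backedges T xs = {(xs ! j, xs ! i) | i j. i < j \<and> j < length xs \<and> T (xs ! j) (xs ! i)}"

definition matching_ordering :: "'a set \<Rightarrow> ('a \<Rightarrow> 'a \<Rightarrow> bool) \<Rightarrow> 'a list \<Rightarrow> bool" where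
  "matching_ordering V T xs \<longleftrightarrow> is_ordering V xs \<and>
     (\<forall>v\<in>V. card {e \<in> backedges T xs. fst e = v \<or> snd e = v} \<le> 1)"

definition P_tour :: "nat \<Rightarrow> nat \<Rightarrow> nat \<Rightarrow> bool" where
  "P_tour n i j \<longleftrightarrow> i \<in> {1..n} \<and> j \<in> {1..n} \<and> (i + 2 \<le> j \<or> i = j + 1)"

definition num_matching_orderings :: "nat \<Rightarrow> nat" where
  "num_matching_orderings n = card {xs. matching_ordering {1..n} (P_tour n) xs}"

end

theory Submission imports Defs begin

definition bef :: "'a list \<Rightarrow> 'a \<Rightarrow> 'a \<Rightarrow> bool" where
  "bef xs u v \<longleftrightarrow> (\<exists>i j. i < j \<and> j < length xs \<and> xs ! i = u \<and> xs ! j = v)"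

lemma back_iff: "(a, b) \<in> backedges T xs \<longleftrightarrow> bef xs b a \<and> T a b"
  unfolding backedges_def bef_def by blast

lemma bef_asym: "distinct xs \<Longrightarrow> bef xs u v \<Longrightarrow> \<not> bef xs v u"
  unfolding bef_def by (metis nth_eq_iff_index_eq order.strict_trans not_less_iff_gr_or_eq)

lemma bef_total: "u \<in> set xs \<Longrightarrow> v \<in> set xs \<Longrightarrow> u \<noteq> v \<Longrightarrow> bef xs u v \<or> bef xs v u"
  unfolding bef_def in_set_conv_nth by (metis linorder_neqE_nat)

lemma bef_trans: "distinct xs \<Longrightarrow> bef xs u v \<Longrightarrow> bef xs v w \<Longrightarrow> bef xs u w"
  unfolding bef_def by (metis nth_eq_iff_index_eq order.strict_trans)

lemma bef_nth: "sorted_wrt R xs \<Longrightarrow> bef xs u v \<Longrightarrow> R u v"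
  unfolding bef_def sorted_wrt_iff_nth_less by blast

lemma bef_set: "bef xs u v \<Longrightarrow> u \<in> set xs \<and> v \<in> set xs"
  unfolding bef_def by auto

lemma mo_share:
  assumes "matching_ordering V T xs" "e1 \<in> backedges T xs" "e2 \<in> backedges T xs" "w \<in> V"
    "fst e1 = w \<or> snd e1 = w" "fst e2 = w \<or> snd e2 = w"
  shows "e1 = e2"
proof -
  have fin: "finite (backedges T xs)"
    by (rule finite_subset[of _ "set xs \<times> set xs"]) (auto simp: backedges_def)
  let ?S = "{e \<in> backedges T xs. fst e = w \<or> snd e = w}"
  have finS: "finite ?S" using fin by simp
  have "card ?S \<le> Suc 0"
    using assms(1,4) unfolding matching_ordering_def by auto
  then have "\<forall>a1\<in>?S. \<forall>a2\<in>?S. a1 = a2" using card_le_Suc0_iff_eq[OF finS] by blast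
  moreover have "e1 \<in> ?S" "e2 \<in> ?S" using assms(2,3,5,6) by auto
  ultimately show ?thesis by blast
qed

lemma mo_intro:
  assumes "is_ordering V xs"
    "\<And>e1 e2 w. e1 \<in> backedges T xs \<Longrightarrow> e2 \<in> backedges T xs \<Longrightarrow>
       fst e1 = w \<or> snd e1 = w \<Longrightarrow> fst e2 = w \<or> snd e2 = w \<Longrightarrow> e1 = e2"
  shows "matching_ordering V T xs"
proof -
  have fin: "finite (backedges T xs)"
    by (rule finite_subset[of _ "set xs \<times> set xs"]) (auto simp: backedges_def)
  have "card {e \<in> backedges T xs. fst e = v \<or> snd e = v} \<le> Suc 0" for v
  proof -
    have finS: "finite {e \<in> backedges T xs. fst e = v \<or> snd e = v}" using fin by simp
    have "\<forall>a1\<in>{e \<in> backedges T xs. fst e = v \<or> snd e = v}. \<forall>a2\<in>{e \<in> backedges T xs. fst e = v \<or> snd e = v}. a1 = a2"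
      using assms(2) by blast
    then show ?thesis using card_le_Suc0_iff_eq[OF finS] by blast
  qed
  then show ?thesis unfolding matching_ordering_def using assms(1) by auto
qed

lemma P_share:
  assumes M: "matching_ordering {1..n} (P_tour n) xs"
    and "bef xs b a" "P_tour n a b" "bef xs d c" "P_tour n c d" "w = a \<or> w = b" "w = c \<or> w = d"
  shows "a = c \<and> b = d"
proof -
  have "w \<in> {1..n}" using assms(3,6) unfolding P_tour_def by auto
  then have "(a, b) = (c, d)"
    using mo_share[OF M, of "(a,b)" "(c,d)" w] assms by (auto simp: back_iff)
  then show ?thesis by simp
qed

lemma mo_ord: "matching_ordering V T xs \<Longrightarrow> distinct xs \<and> set xs = V"
  unfolding matching_ordering_def is_ordering_def by simp

lemma big_inv:
  assumes M: "matching_ordering {1..n} (P_tour n) xs"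
    and u: "1 \<le> u" "u + 2 \<le> v" "v \<le> n" and b: "bef xs v u"
  shows "u = 1 \<and> v = n \<and> n \<le> 4"
proof -
  have D: "distinct xs" and S: "set xs = {1..n}" using mo_ord[OF M] by auto
  have Puv: "P_tour n u v" using u unfolding P_tour_def by auto
  have u1: "u = 1"
  proof (rule ccontr)
    assume "u \<noteq> 1"
    then have "u - 1 \<in> set xs" "v \<in> set xs" "u \<in> set xs" "u - 1 \<noteq> v" "u - 1 \<noteq> u"
      using u S by auto
    then consider "bef xs v (u - 1)" | "bef xs (u - 1) v" using bef_total[of "u - 1" xs v] by blast
    then show False
    proof cases
      case 1
      have "P_tour n (u - 1) v" using u \<open>u \<noteq> 1\<close> unfolding P_tour_def by auto
      from P_share[OF M 1 this b Puv, of v] \<open>u \<noteq> 1\<close> u show False by auto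
    next
      case 2
      then have c: "bef xs (u - 1) u" using bef_trans[OF D 2 b] by simp
      have "P_tour n u (u - 1)" using u \<open>u \<noteq> 1\<close> unfolding P_tour_def by auto
      from P_share[OF M c this b Puv, of u] u show False by auto
    qed
  qed
  have vn: "v = n"
  proof (rule ccontr)
    assume "v \<noteq> n"
    then have "v + 1 \<in> set xs" "v \<in> set xs" "u \<in> set xs" "u \<noteq> v + 1"
      using u S by auto
    then consider "bef xs (v + 1) u" | "bef xs u (v + 1)" using bef_total[of u xs "v + 1"] by blast
    then show False
    proof cases
      case 1
      have "P_tour n u (v + 1)" using u \<open>v \<noteq> n\<close> unfolding P_tour_def by auto
      from P_share[OF M 1 this b Puv, of u] u show False by auto
    next
      case 2
      then have c: "bef xs v (v + 1)" using bef_trans[OF D b 2] by simp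
      have "P_tour n (v + 1) v" using u \<open>v \<noteq> n\<close> unfolding P_tour_def by auto
      from P_share[OF M c this b Puv, of v] u show False by auto
    qed
  qed
  show "u = 1 \<and> v = n \<and> n \<le> 4"
  proof (rule ccontr)
    assume "\<not> (u = 1 \<and> v = n \<and> n \<le> 4)"
    then have "\<not> n \<le> 4" using u1 vn by simp
    then have "(3::nat) \<in> set xs" "1 \<in> set xs" "(3::nat) \<noteq> 1" using S by auto
    then consider "bef xs 3 1" | "bef xs 1 3" using bef_total[of 3 xs 1] by blast
    then show False
    proof cases
      case 1
      have "P_tour n 1 3" using \<open>\<not> n \<le> 4\<close> unfolding P_tour_def by auto
      from P_share[OF M 1 this b Puv, of 1] u1 vn \<open>\<not> n \<le> 4\<close> show False by auto
    next
      case 2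
      then have c: "bef xs v 3" using bef_trans[OF D b] u1 by simp
      have "P_tour n 3 v" using \<open>\<not> n \<le> 4\<close> vn unfolding P_tour_def by auto
      from P_share[OF M c this b Puv, of v] u1 vn \<open>\<not> n \<le> 4\<close> show False by auto
    qed
  qed
qed


lemma no_big:
  assumes M: "matching_ordering {1..n} (P_tour n) xs" and n: "(n \<noteq> 3 \<and> n \<noteq> 4) \<or> \<not> bef xs n 1"
    and u: "1 \<le> u" "u + 2 \<le> v" "v \<le> n"
  shows "bef xs u v"
proof -
  have S: "set xs = {1..n}" using mo_ord[OF M] by auto
  have "\<not> bef xs v u" using big_inv[OF M u] n u by auto
  moreover have "u \<in> set xs" "v \<in> set xs" "u \<noteq> v" using u S by auto
  ultimately show ?thesis using bef_total[of u xs v] by blast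
qed

lemma alt_step:
  assumes M: "matching_ordering {1..n} (P_tour n) xs" and NB: "\<And>u v. 1 \<le> u \<Longrightarrow> u + 2 \<le> v \<Longrightarrow> v \<le> n \<Longrightarrow> bef xs u v"
    and u: "1 \<le> u" "u + 2 \<le> n"
  shows "bef xs (u+1) u \<longleftrightarrow> \<not> bef xs (u+2) (u+1)"
proof -
  have D: "distinct xs" and S: "set xs = {1..n}" using mo_ord[OF M] by auto
  have nb: "bef xs u (u+2)" using NB[OF u(1) _ u(2)] by simp
  show ?thesis
  proof
    assume a: "bef xs (u+1) u"
    show "\<not> bef xs (u+2) (u+1)"
    proof
      assume "bef xs (u+2) (u+1)"
      then have "bef xs (u+2) u" using bef_trans[OF D _ a] by blast
      then show False using bef_asym[OF D nb] by blast
    qed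
  next
    assume a: "\<not> bef xs (u+2) (u+1)"
    have "u+2 \<in> set xs" "u+1 \<in> set xs" "u \<in> set xs" using u S by auto
    then have b1: "bef xs (u+1) (u+2)" using a bef_total[of "u+1" xs "u+2"] by auto
    show "bef xs (u+1) u"
    proof (rule ccontr)
      assume "\<not> bef xs (u+1) u"
      then have b2: "bef xs u (u+1)" using bef_total[of "u+1" xs u] \<open>u+1 \<in> set xs\<close> \<open>u \<in> set xs\<close> by auto
      have p1: "P_tour n (u+1) u" "P_tour n (u+2) (u+1)" using u unfolding P_tour_def by auto
      from P_share[OF M b2 p1(1) b1 p1(2), of "u+1"] show False by auto
    qed
  qed
qed

lemma alt:
  assumes M: "matching_ordering {1..n} (P_tour n) xs" and NB: "\<And>u v. 1 \<le> u \<Longrightarrow> u + 2 \<le> v \<Longrightarrow> v \<le> n \<Longrightarrow> bef xs u v"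
  shows "k + 2 \<le> n \<Longrightarrow> bef xs (k+2) (k+1) \<longleftrightarrow> (bef xs 2 1 \<longleftrightarrow> even k)"
proof (induction k)
  case 0 then show ?case by (simp add: numeral_2_eq_2)
next
  case (Suc k)
  have ih: "bef xs (k+2) (k+1) \<longleftrightarrow> (bef xs 2 1 \<longleftrightarrow> even k)" using Suc by simp
  have e1: "k+1+1 = k+2" and e2: "k+1+2 = k+3" by simp_all
  have "1 \<le> k + 1" "k + 1 + 2 \<le> n" using Suc.prems by simp_all
  note st = alt_step[OF M NB this, unfolded e1 e2]
  have e3: "Suc k + 2 = k+3" and e4: "Suc k + 1 = k + 2" by simp_all
  have ev: "even (Suc k) \<longleftrightarrow> \<not> even k" by simp
  show ?case unfolding e3 e4 using ih st ev by blast
qed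

definition kA :: "nat \<Rightarrow> nat" where "kA v = (if v = 1 then 1 else if even v then v + 1 else v - 1)"
definition kB :: "nat \<Rightarrow> nat" where "kB v = (if odd v then v + 1 else v - 1)"

lemma kA_inj: "inj_on kA {1..n}"
  unfolding inj_on_def kA_def by (auto split: if_splits) presburger+

lemma kB_inj: "inj_on kB {1..n}"
  unfolding inj_on_def kB_def by (auto split: if_splits) presburger+

lemma key_sorted:
  fixes k :: "'a \<Rightarrow> nat"
  assumes D: "distinct xs" and S: "set xs = V" and inj: "inj_on k V"
    and H: "\<And>u v. u \<in> V \<Longrightarrow> v \<in> V \<Longrightarrow> k u < k v \<Longrightarrow> bef xs u v"
  shows "sorted_wrt (\<lambda>x y. k x < k y) xs"
  unfolding sorted_wrt_iff_nth_less
proof (intro allI impI)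
  fix i j assume ij: "i < j" "j < length xs"
  then have b: "bef xs (xs!i) (xs!j)" unfolding bef_def by blast
  have in1: "xs!i \<in> V" "xs!j \<in> V" using ij S by auto
  have ne: "xs!i \<noteq> xs!j" using ij D by (simp add: nth_eq_iff_index_eq)
  show "k (xs!i) < k (xs!j)"
  proof (rule ccontr)
    assume "\<not> k (xs!i) < k (xs!j)"
    moreover have "k (xs!i) \<noteq> k (xs!j)" using inj in1 ne by (meson inj_on_eq_iff)
    ultimately have "k (xs!j) < k (xs!i)" by simp
    then have "bef xs (xs!j) (xs!i)" using H in1 by blast
    then show False using bef_asym[OF D b] by blast
  qed
qed

lemma key_unique:
  fixes k :: "'a \<Rightarrow> nat"
  assumes "inj_on k V" "distinct xs" "set xs = V" "distinct ys" "set ys = V"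
    "sorted_wrt (\<lambda>x y. k x < k y) xs" "sorted_wrt (\<lambda>x y. k x < k y) ys"
  shows "xs = ys"
proof -
  have "sorted_wrt (<) (map k xs)" "sorted_wrt (<) (map k ys)"
    using assms(6,7) by (simp_all add: sorted_wrt_map)
  then have "sorted (map k xs)" "distinct (map k xs)" "sorted (map k ys)" "distinct (map k ys)"
    by (simp_all add: strict_sorted_iff)
  then show ?thesis using assms(1,3,5)
    by (intro map_sorted_distinct_set_unique[of k]) auto
qed


lemma kA_cases: "kA u < kA v \<Longrightarrow> 1 \<le> u \<Longrightarrow> 1 \<le> v \<Longrightarrow>
   u + 2 \<le> v \<or> (v = u + 1 \<and> odd u) \<or> (u = v + 1 \<and> even v)"
  unfolding kA_def by (auto split: if_splits) presburger+

lemma kB_cases: "kB u < kB v \<Longrightarrow> 1 \<le> u \<Longrightarrow> 1 \<le> v \<Longrightarrow>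
   u + 2 \<le> v \<or> (v = u + 1 \<and> even u) \<or> (u = v + 1 \<and> odd v)"
  unfolding kB_def by (auto split: if_splits) presburger+

lemma classify:
  assumes M: "matching_ordering {1..n} (P_tour n) xs" and NB: "\<And>u v. 1 \<le> u \<Longrightarrow> u + 2 \<le> v \<Longrightarrow> v \<le> n \<Longrightarrow> bef xs u v"
  shows "(\<not> bef xs 2 1 \<and> sorted_wrt (\<lambda>x y. kA x < kA y) xs) \<or>
         (bef xs 2 1 \<and> sorted_wrt (\<lambda>x y. kB x < kB y) xs)"
proof -
  have D: "distinct xs" and S: "set xs = {1..n}" using mo_ord[OF M] by auto
  have altk: "bef xs (u+1) u \<longleftrightarrow> (bef xs 2 1 \<longleftrightarrow> odd u)" if "1 \<le> u" "u + 1 \<le> n" for u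
    using alt[OF M NB, of "u - 1"] that by (cases u) auto
  have tot: "bef xs u v" if "\<not> bef xs v u" "u \<in> {1..n}" "v \<in> {1..n}" "u \<noteq> v" for u v
    using bef_total[of u xs v] that S by auto
  show ?thesis
  proof (cases "bef xs 2 1")
    case False
    have "sorted_wrt (\<lambda>x y. kA x < kA y) xs"
    proof (rule key_sorted[OF D S kA_inj])
      fix u v assume uv: "u \<in> {1..n}" "v \<in> {1..n}" "kA u < kA v"
      then consider "u + 2 \<le> v" | "v = u + 1 \<and> odd u" | "u = v + 1 \<and> even v"
        using kA_cases by fastforce
      then show "bef xs u v"
      proof cases
        case 1 then show ?thesis using NB[of u v] uv by auto
      next
        case 2 then show ?thesis using altk[of u] False uv tot[of u v] by auto
      next
        case 3 then show ?thesis using altk[of v] False uv by auto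
      qed
    qed
    then show ?thesis using False by blast
  next
    case True
    have "sorted_wrt (\<lambda>x y. kB x < kB y) xs"
    proof (rule key_sorted[OF D S kB_inj])
      fix u v assume uv: "u \<in> {1..n}" "v \<in> {1..n}" "kB u < kB v"
      then consider "u + 2 \<le> v" | "v = u + 1 \<and> even u" | "u = v + 1 \<and> odd v"
        using kB_cases by fastforce
      then show "bef xs u v"
      proof cases
        case 1 then show ?thesis using NB[of u v] uv by auto
      next
        case 2 then show ?thesis using altk[of u] True uv tot[of u v] by auto
      next
        case 3 then show ?thesis using altk[of v] True uv by auto
      qed
    qed
    then show ?thesis using True by blast
  qed
qed

definition LA :: "nat \<Rightarrow> nat list" where "LA n = sort_key kA [1..<n+1]"
definition LB :: "nat \<Rightarrow> nat list" where "LB n = sort_key kB [1..<n+1]"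

lemma sort_key_sorted:
  assumes "inj_on k {1..n}"
  shows "distinct (sort_key k [1..<n+1]) \<and> set (sort_key k [1..<n+1]) = {1..n} \<and>
         sorted_wrt (\<lambda>x y. k x < k y) (sort_key k [1..<n+1])"
proof -
  let ?L = "sort_key k [1..<n+1]"
  have s: "set ?L = {1..n}" by auto
  have d: "distinct ?L" by simp
  have "distinct (map k ?L)" using d s assms by (simp add: distinct_map)
  moreover have "sorted (map k ?L)" by simp
  ultimately have "sorted_wrt (<) (map k ?L)" by (simp add: strict_sorted_iff)
  then show ?thesis using s d by (simp add: sorted_wrt_map)
qed

lemma exist_key:
  assumes inj: "inj_on k {1..n}"
    and E: "\<And>a b. k b < k a \<Longrightarrow> P_tour n a b \<Longrightarrow> a = b + 1 \<and> Q b"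
    and Q: "\<And>x. Q x \<Longrightarrow> \<not> Q (x + 1)"
  shows "matching_ordering {1..n} (P_tour n) (sort_key k [1..<n+1])"
proof -
  let ?L = "sort_key k [1..<n+1]"
  note L = sort_key_sorted[OF inj]
  have be: "a = b + 1 \<and> Q b" if "(a, b) \<in> backedges (P_tour n) ?L" for a b
  proof -
    have 1: "bef ?L b a" "P_tour n a b" using that unfolding back_iff by auto
    have "k b < k a" using bef_nth[of "\<lambda>x y. k x < k y" ?L b a] L 1(1) by blast
    then show ?thesis using E 1(2) by blast
  qed
  show ?thesis
  proof (rule mo_intro)
    show "is_ordering {1..n} ?L" using L unfolding is_ordering_def by blast
    fix e1 e2 w assume e: "e1 \<in> backedges (P_tour n) ?L" "e2 \<in> backedges (P_tour n) ?L"
      "fst e1 = w \<or> snd e1 = w" "fst e2 = w \<or> snd e2 = w"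
    obtain a b where ab1: "e1 = (a,b)" by (cases e1)
    obtain c d where ab2: "e2 = (c,d)" by (cases e2)
    note ab = ab1 ab2
    have "(a,b) \<in> backedges (P_tour n) ?L" "(c,d) \<in> backedges (P_tour n) ?L" using e(1,2) ab by simp_all
    then have h: "a = b + 1" "Q b" "c = d + 1" "Q d" using be by blast+
    have "b = d \<or> b = d + 1 \<or> d = b + 1" using e(3,4) ab h(1,3) by auto
    then have "b = d" using Q h(2,4) by blast
    then show "e1 = e2" using ab h(1,3) by simp
  qed
qed

lemma LA_mo: "matching_ordering {1..n} (P_tour n) (LA n)"
  unfolding LA_def
proof (rule exist_key[OF kA_inj, where Q = odd])
  fix a b assume "kA b < kA a" "P_tour n a b"
  then show "a = b + 1 \<and> odd b" using kA_cases[of b a] unfolding P_tour_def by auto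
qed simp

lemma LB_mo: "matching_ordering {1..n} (P_tour n) (LB n)"
  unfolding LB_def
proof (rule exist_key[OF kB_inj, where Q = even])
  fix a b assume "kB b < kB a" "P_tour n a b"
  then show "a = b + 1 \<and> even b" using kB_cases[of b a] unfolding P_tour_def by auto
qed simp

lemma main_count:
  assumes n: "n \<noteq> 3" "n \<noteq> 4"
  shows "{xs. matching_ordering {1..n} (P_tour n) xs} =
     (if bef (LB n) 2 1 then {LA n, LB n} else {LA n})"
proof -
  note LAs = sort_key_sorted[OF kA_inj, of n, folded LA_def]
  note LBs = sort_key_sorted[OF kB_inj, of n, folded LB_def]
  have "xs = LA n \<or> (xs = LB n \<and> bef (LB n) 2 1)"
    if M: "matching_ordering {1..n} (P_tour n) xs" for xs
  proof -
    have D: "distinct xs" and S: "set xs = {1..n}" using mo_ord[OF M] by auto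
    have NB: "bef xs u v" if "1 \<le> u" "u + 2 \<le> v" "v \<le> n" for u v
      using no_big[OF M _ that] n by blast
    from classify[OF M NB] show ?thesis
    proof
      assume "\<not> bef xs 2 1 \<and> sorted_wrt (\<lambda>x y. kA x < kA y) xs"
      then have "xs = LA n" using key_unique[OF kA_inj D S] LAs by blast
      then show ?thesis by simp
    next
      assume a: "bef xs 2 1 \<and> sorted_wrt (\<lambda>x y. kB x < kB y) xs"
      then have "xs = LB n" using key_unique[OF kB_inj D S] LBs by blast
      then show ?thesis using a by simp
    qed
  qed
  then show ?thesis using LA_mo LB_mo by (auto split: if_splits)
qed

lemma LA_ne_LB: assumes "bef (LB n) 2 1" shows "LA n \<noteq> LB n"
proof
  assume e: "LA n = LB n"
  note LAs = sort_key_sorted[OF kA_inj, of n, folded LA_def]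
  have "bef (LA n) 2 1" using assms e by simp
  then have "kA 2 < kA 1" using bef_nth[of "\<lambda>x y. kA x < kA y" "LA n" 2 1] LAs by blast
  then show False by (simp add: kA_def)
qed

lemma bef_LB: assumes "2 \<le> n" shows "bef (LB n) 2 1"
proof -
  note LBs = sort_key_sorted[OF kB_inj, of n, folded LB_def]
  have "\<not> bef (LB n) 1 2"
  proof
    assume "bef (LB n) 1 2"
    then have "kB 1 < kB 2" using bef_nth[of "\<lambda>x y. kB x < kB y" "LB n" 1 2] LBs by blast
    then show False by (simp add: kB_def)
  qed
  moreover have "2 \<in> set (LB n)" "1 \<in> set (LB n)" using LBs assms by auto
  ultimately show ?thesis using bef_total[of 2 "LB n" 1] by auto
qed

lemma count_gen: "n \<noteq> 3 \<Longrightarrow> n \<noteq> 4 \<Longrightarrow> 2 \<le> n \<Longrightarrow> num_matching_orderings n = 2"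
  unfolding num_matching_orderings_def using main_count bef_LB LA_ne_LB by simp

lemma count_1: "num_matching_orderings 1 = 1"
proof -
  have "set (LB 1) = {1..1}" using sort_key_sorted[OF kB_inj, of 1, folded LB_def] by blast
  then have "\<not> bef (LB 1) 2 1" using bef_set[of "LB 1" 2 1] by auto
  then show ?thesis unfolding num_matching_orderings_def using main_count[of 1] by simp
qed

lemma nb_class:
  assumes M: "matching_ordering {1..n} (P_tour n) xs" and n: "(n \<noteq> 3 \<and> n \<noteq> 4) \<or> \<not> bef xs n 1"
  shows "xs = LA n \<or> xs = LB n"
proof -
  note LAs = sort_key_sorted[OF kA_inj, of n, folded LA_def]
  note LBs = sort_key_sorted[OF kB_inj, of n, folded LB_def]
  have D: "distinct xs" and S: "set xs = {1..n}" using mo_ord[OF M] by auto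
  have NB: "bef xs u v" if "1 \<le> u" "u + 2 \<le> v" "v \<le> n" for u v
    using no_big[OF M n that] .
  from classify[OF M NB] show ?thesis
    using key_unique[OF kA_inj D S] LAs key_unique[OF kB_inj D S] LBs by blast
qed

definition kC3 :: "nat \<Rightarrow> nat" where "kC3 v = 4 - v"
definition kC4 :: "nat \<Rightarrow> nat" where
  "kC4 v = (if v = 2 then 1 else if v = 4 then 2 else if v = 1 then 3 else 4)"

lemma kC3_inj: "inj_on kC3 {1..3}" unfolding inj_on_def kC3_def by auto
lemma kC4_inj: "inj_on kC4 {1..4}" unfolding inj_on_def kC4_def by auto

lemma e3: "{1..3::nat} = {1,2,3}" by auto
lemma e4: "{1..4::nat} = {1,2,3,4}" by auto

lemma case3:
  assumes M: "matching_ordering {1..3} (P_tour 3) xs" and b: "bef xs 3 1"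
  shows "xs = [3,2,1]"
proof -
  have D: "distinct xs" and S: "set xs = {1..3}" using mo_ord[OF M] by auto
  have P13: "P_tour 3 1 3" by (simp add: P_tour_def)
  have b32: "bef xs 3 2"
  proof (rule ccontr)
    assume "\<not> bef xs 3 2"
    then have c: "bef xs 2 3" using bef_total[of 2 xs 3] S by auto
    have "P_tour 3 3 2" by (simp add: P_tour_def)
    from P_share[OF M c this b P13, of 3] show False by simp
  qed
  have b21: "bef xs 2 1"
  proof (rule ccontr)
    assume "\<not> bef xs 2 1"
    then have c: "bef xs 1 2" using bef_total[of 2 xs 1] S by auto
    have "P_tour 3 2 1" by (simp add: P_tour_def)
    from P_share[OF M c this b P13, of 1] show False by simp
  qed
  have "sorted_wrt (\<lambda>x y. kC3 x < kC3 y) xs"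
  proof (rule key_sorted[OF D S kC3_inj])
    fix u v assume "u \<in> {1..3}" "v \<in> {1..3}" "kC3 u < kC3 v"
    then show "bef xs u v" using b b32 b21 unfolding e3 kC3_def by auto
  qed
  moreover have "sorted_wrt (\<lambda>x y. kC3 x < kC3 y) [3,2,1]" by (simp add: kC3_def)
  moreover have "distinct [3,2,1::nat]" "set [3,2,1] = {1..3::nat}" by (auto simp: e3)
  ultimately show ?thesis using key_unique[OF kC3_inj D S] by blast
qed

lemma case4:
  assumes M: "matching_ordering {1..4} (P_tour 4) xs" and b: "bef xs 4 1"
  shows "xs = [2,4,1,3]"
proof -
  have D: "distinct xs" and S: "set xs = {1..4}" using mo_ord[OF M] by auto
  have P14: "P_tour 4 1 4" by (simp add: P_tour_def)
  have b24: "bef xs 2 4"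
  proof (rule ccontr)
    assume "\<not> bef xs 2 4"
    then have c: "bef xs 4 2" using bef_total[of 2 xs 4] S by auto
    have "P_tour 4 2 4" by (simp add: P_tour_def)
    from P_share[OF M c this b P14, of 4] show False by simp
  qed
  have b13: "bef xs 1 3"
  proof (rule ccontr)
    assume "\<not> bef xs 1 3"
    then have c: "bef xs 3 1" using bef_total[of 1 xs 3] S by auto
    have "P_tour 4 1 3" by (simp add: P_tour_def)
    from P_share[OF M c this b P14, of 1] show False by simp
  qed
  have b21: "bef xs 2 1" using bef_trans[OF D b24 b] .
  have b43: "bef xs 4 3" using bef_trans[OF D b b13] .
  have b23: "bef xs 2 3" using bef_trans[OF D b21 b13] .
  have "sorted_wrt (\<lambda>x y. kC4 x < kC4 y) xs"
  proof (rule key_sorted[OF D S kC4_inj])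
    fix u v assume "u \<in> {1..4}" "v \<in> {1..4}" "kC4 u < kC4 v"
    then show "bef xs u v" using b b24 b13 b21 b43 b23 unfolding e4 kC4_def by auto
  qed
  moreover have "sorted_wrt (\<lambda>x y. kC4 x < kC4 y) [2,4,1,3]" by (simp add: kC4_def)
  moreover have "distinct [2,4,1,3::nat]" "set [2,4,1,3] = {1..4::nat}" by (auto simp: e4)
  ultimately show ?thesis using key_unique[OF kC4_inj D S] by blast
qed

lemma C3_mo: "matching_ordering {1..3} (P_tour 3) [3,2,1]"
proof (rule mo_intro)
  let ?L = "[3,2,1::nat]"
  have srt: "sorted_wrt (\<lambda>x y. kC3 x < kC3 y) ?L" by (simp add: kC3_def)
  show "is_ordering {1..3} ?L" unfolding is_ordering_def by (auto simp: e3)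
  have be: "a = 1 \<and> b = 3" if "(a, b) \<in> backedges (P_tour 3) ?L" for a b
  proof -
    have 1: "bef ?L b a" "P_tour 3 a b" using that unfolding back_iff by auto
    have "kC3 b < kC3 a" using bef_nth[of "\<lambda>x y. kC3 x < kC3 y" ?L b a] srt 1(1) by blast
    then show ?thesis using 1(2) unfolding kC3_def P_tour_def by auto
  qed
  fix e1 e2 w assume e: "e1 \<in> backedges (P_tour 3) ?L" "e2 \<in> backedges (P_tour 3) ?L"
  obtain a b where ab1: "e1 = (a,b)" by (cases e1)
  obtain c d where ab2: "e2 = (c,d)" by (cases e2)
  have "(a,b) \<in> backedges (P_tour 3) ?L" "(c,d) \<in> backedges (P_tour 3) ?L" using e ab1 ab2 by simp_all
  then have "a = 1 \<and> b = 3" "c = 1 \<and> d = 3" using be by blast+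
  then show "e1 = e2" using ab1 ab2 by simp
qed

lemma C4_mo: "matching_ordering {1..4} (P_tour 4) [2,4,1,3]"
proof (rule mo_intro)
  let ?L = "[2,4,1,3::nat]"
  have srt: "sorted_wrt (\<lambda>x y. kC4 x < kC4 y) ?L" by (simp add: kC4_def)
  show "is_ordering {1..4} ?L" unfolding is_ordering_def by (auto simp: e4)
  have be: "(a = 1 \<and> b = 4) \<or> (a = 3 \<and> b = 2)" if "(a, b) \<in> backedges (P_tour 4) ?L" for a b
  proof -
    have 1: "bef ?L b a" "P_tour 4 a b" using that unfolding back_iff by auto
    have "kC4 b < kC4 a" using bef_nth[of "\<lambda>x y. kC4 x < kC4 y" ?L b a] srt 1(1) by blast
    moreover have "a \<in> {1,2,3,4}" "b \<in> {1,2,3,4}" using 1(2) unfolding P_tour_def by auto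
    ultimately show ?thesis using 1(2) unfolding kC4_def P_tour_def by auto
  qed
  fix e1 e2 w assume e: "e1 \<in> backedges (P_tour 4) ?L" "e2 \<in> backedges (P_tour 4) ?L"
    "fst e1 = w \<or> snd e1 = w" "fst e2 = w \<or> snd e2 = w"
  obtain a b where ab1: "e1 = (a,b)" by (cases e1)
  obtain c d where ab2: "e2 = (c,d)" by (cases e2)
  have "(a,b) \<in> backedges (P_tour 4) ?L" "(c,d) \<in> backedges (P_tour 4) ?L" using e ab1 ab2 by simp_all
  then have h: "(a = 1 \<and> b = 4) \<or> (a = 3 \<and> b = 2)" "(c = 1 \<and> d = 4) \<or> (c = 3 \<and> d = 2)" using be by blast+
  show "e1 = e2" using h e(3,4) ab1 ab2 by auto
qed

lemma LA3: "LA 3 = [1,3,2]" by (simp add: LA_def kA_def upt_rec)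
lemma LB3: "LB 3 = [2,1,3]" by (simp add: LB_def kB_def upt_rec)
lemma LA4: "LA 4 = [1,3,2,4]" by (simp add: LA_def kA_def upt_rec)
lemma LB4: "LB 4 = [2,1,4,3]" by (simp add: LB_def kB_def upt_rec)

lemma count_3: "num_matching_orderings 3 = 3"
proof -
  have "{xs. matching_ordering {1..3} (P_tour 3) xs} = {[1,3,2],[2,1,3],[3,2,1]}"
  proof (rule set_eqI, rule iffI)
    fix xs assume "xs \<in> {xs. matching_ordering {1..3} (P_tour 3) xs}"
    then have M: "matching_ordering {1..3} (P_tour 3) xs" by simp
    show "xs \<in> {[1,3,2],[2,1,3],[3,2,1]}"
    proof (cases "bef xs 3 1")
      case True then show ?thesis using case3[OF M] by simp
    next
      case False then show ?thesis using nb_class[OF M] LA3 LB3 by auto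
    qed
  next
    fix xs assume "xs \<in> {[1,3,2],[2,1,3],[3,2,1::nat]}"
    then show "xs \<in> {xs. matching_ordering {1..3} (P_tour 3) xs}"
      using LA_mo[of 3] LB_mo[of 3] C3_mo unfolding LA3 LB3 by blast
  qed
  then show ?thesis unfolding num_matching_orderings_def by simp
qed

lemma count_4: "num_matching_orderings 4 = 3"
proof -
  have "{xs. matching_ordering {1..4} (P_tour 4) xs} = {[1,3,2,4],[2,1,4,3],[2,4,1,3]}"
  proof (rule set_eqI, rule iffI)
    fix xs assume "xs \<in> {xs. matching_ordering {1..4} (P_tour 4) xs}"
    then have M: "matching_ordering {1..4} (P_tour 4) xs" by simp
    show "xs \<in> {[1,3,2,4],[2,1,4,3],[2,4,1,3]}"
    proof (cases "bef xs 4 1")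
      case True then show ?thesis using case4[OF M] by simp
    next
      case False then show ?thesis using nb_class[OF M] LA4 LB4 by auto
    qed
  next
    fix xs assume "xs \<in> {[1,3,2,4],[2,1,4,3],[2,4,1,3::nat]}"
    then show "xs \<in> {xs. matching_ordering {1..4} (P_tour 4) xs}"
      using LA_mo[of 4] LB_mo[of 4] C4_mo unfolding LA4 LB4 by blast
  qed
  then show ?thesis unfolding num_matching_orderings_def by simp
qed

theorem corollary5p6:
  shows "num_matching_orderings 1 = 1 \<and> num_matching_orderings 3 = 3 \<and>
         num_matching_orderings 4 = 3 \<and>
         (\<forall>n\<ge>2. n \<noteq> 3 \<and> n \<noteq> 4 \<longrightarrow> num_matching_orderings n = 2)"
  using count_1 count_3 count_4 count_gen by blast

end
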